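(* There exists a probability measure $\mu$ on $\{0,1\}^{\mathbb{N}}$ such that $\Delta_n(\mu)\to0$ as $n\to\infty$ but $\mu$ does not satisfy the following condition (TC1): $(\mathbb{N},\xi)$ is totally bounded and for every $\varepsilon>0$ there exist events $(E_k)_{k\in\mathbb{N}}$ (in the probability space on which $X\sim\mu$ is defined) and a finite set $J\subset\mathbb{N}$ with (1) $\mathbb{P}(E_k)\le\varepsilon$ for all $k$; (2) $\sup_k\frac{\log(k+1)}{\log(1/\mathbb{P}(E_k))}<\infty$; (3) for every $i\in\mathbb{N}$ there exist $j\in J$ and $k\in\mathbb{N}$ with $\{X_i\neq X_j\}\subset E_k$.
   Context: For $X\sim\mu$, $\xi(i,j):=\mathbb{P}(X_i\neq X_j)$; $(\mathbb{N},\xi)$ is totally bounded if for every $\varepsilon>0$ there is a finite $S\subset\mathbb{N}$ such that every $i$ has $s\in S$ with $\xi(i,s)\le\varepsilon$. For $n\ge1$, with $X^{(1)},\dots,X^{(n)}$ i.i.d. from $\mu$, $\Delta_n(\mu):=\mathbb{E}\sup_{j\in\mathbb{N}}\left|\frac1n\sum_{i=1}^nX^{(i)}_j-\mathbb{E}[X_j]\right|$. $\log(1/0)=\infty$. *)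

theory Defs
  imports "HOL-Probability.Probability"
begin

text \<open>The coordinate X_j is x j (True = 1, False = 0). A probability measure mu on {0,1}^N
  is a measure M on this space with prob_space M; X ~ mu is realised canonically as the
  identity on (space M, M).\<close>

definition cube :: "(nat \<Rightarrow> bool) measure" where
  "cube = (\<Pi>\<^sub>M j\<in>(UNIV::nat set). count_space (UNIV::bool set))"

definition is_prob_on_cube :: "(nat \<Rightarrow> bool) measure \<Rightarrow> bool" where
  "is_prob_on_cube M \<longleftrightarrow> prob_space M \<and> sets M = sets cube"

definition xi :: "(nat \<Rightarrow> bool) measure \<Rightarrow> nat \<Rightarrow> nat \<Rightarrow> real" where
  "xi M i j = measure M {x \<in> space M. x i \<noteq> x j}"

definition totally_bounded_xi :: "(nat \<Rightarrow> bool) measure \<Rightarrow> bool" where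
  "totally_bounded_xi M \<longleftrightarrow>
     (\<forall>\<epsilon>>0. \<exists>S. finite S \<and> (\<forall>i. \<exists>s\<in>S. xi M i s \<le> \<epsilon>))"

text \<open>Computed as a nonnegative integral in ennreal
  (the integrand takes values in [0,1]).\<close>
definition Delta :: "(nat \<Rightarrow> bool) measure \<Rightarrow> nat \<Rightarrow> ennreal" where
  "Delta M n = (\<integral>\<^sup>+ \<omega>. (SUP j. ennreal \<bar>(1 / real n) * (\<Sum>i<n. (if \<omega> i j then 1 else 0))
        - measure M {x \<in> space M. x j}\<bar>) \<partial>(\<Pi>\<^sub>M i\<in>{..<n}. M))"

text \<open>Condition (2), sup_k log(k+1)/log(1/P(E_k)) < \<infinity> with log(1/0) = \<infinity>,
  is written as: there is a constant C such that for every k either P(E_k) = 0 (ratio 0)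
  or log(k+1) \<le> C * log(1/P(E_k)).\<close>
definition TC1 :: "(nat \<Rightarrow> bool) measure \<Rightarrow> bool" where
  "TC1 M \<longleftrightarrow> totally_bounded_xi M \<and>
     (\<forall>\<epsilon>>0. \<exists>(E :: nat \<Rightarrow> (nat \<Rightarrow> bool) set) J.
        (\<forall>k. E k \<in> sets M) \<and> finite J \<and>
        (\<forall>k. measure M (E k) \<le> \<epsilon>) \<and>
        (\<exists>C::real. \<forall>k. measure M (E k) = 0 \<or> ln (real k + 1) \<le> C * ln (1 / measure M (E k))) \<and>
        (\<forall>i. \<exists>j\<in>J. \<exists>k. {x \<in> space M. x i \<noteq> x j} \<subseteq> E k))"

end

theory Submission
  imports Defs
begin


definition pr :: "nat \<Rightarrow> real" where "pr i = 1 / (real i + 2)"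
definition MM :: "(nat \<Rightarrow> bool) measure" where
  "MM = (\<Pi>\<^sub>M i\<in>(UNIV::nat set). measure_pmf (bernoulli_pmf (pr i)))"

lemma pr_pos: "0 < pr i" and pr_le: "pr i \<le> 1/2" and pr_le1: "pr i \<le> 1"
  by (auto simp: pr_def field_simps)

interpretation MMp: product_prob_space "\<lambda>i. measure_pmf (bernoulli_pmf (pr i))" UNIV
  by unfold_locales

lemma prob_MM: "prob_space MM"
  unfolding MM_def by (rule MMp.P.prob_space_axioms)

interpretation MMs: prob_space MM by (rule prob_MM)

lemma space_MM: "space MM = UNIV"
  by (simp add: MM_def space_PiM)

lemma sets_MM: "sets MM = sets cube"
  unfolding MM_def cube_def by (intro sets_PiM_cong) auto

lemma emeasure_MM_Collect:
  assumes "finite J"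
  shows "emeasure MM {x. \<forall>i\<in>J. x i = b i} = (\<Prod>i\<in>J. ennreal (if b i then pr i else 1 - pr i))"
proof -
  have "emeasure MM {x. \<forall>i\<in>J. x i = b i} = emeasure MM {x\<in>space MM. \<forall>i\<in>J. x i \<in> {b i}}"
    by (simp add: space_MM)
  also have "\<dots> = (\<Prod>i\<in>J. emeasure (measure_pmf (bernoulli_pmf (pr i))) {b i})"
    unfolding MM_def by (rule MMp.emeasure_PiM_Collect) (use assms in auto)
  also have "\<dots> = (\<Prod>i\<in>J. ennreal (if b i then pr i else 1 - pr i))"
    using pr_pos pr_le1 by (intro prod.cong refl) (auto simp: emeasure_pmf_single less_imp_le)
  finally show ?thesis .
qed

lemma measure_MM_Collect:
  assumes "finite J"
  shows "measure MM {x. \<forall>i\<in>J. x i = b i} = (\<Prod>i\<in>J. (if b i then pr i else 1 - pr i))"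
proof -
  have nn: "\<And>i. 0 \<le> (if b i then pr i else 1 - pr i)" using pr_pos pr_le1 by (auto simp: less_imp_le)
  show ?thesis
  using emeasure_MM_Collect[OF assms, of b] MMs.emeasure_eq_measure
  by (simp add: prod_ennreal nn prod_nonneg)
qed

lemma meas_comp[measurable]: "(\<lambda>x. x i) \<in> measurable MM (count_space UNIV)"
proof -
  have "(\<lambda>x. x i) \<in> measurable MM (measure_pmf (bernoulli_pmf (pr i)))"
    unfolding MM_def by (rule measurable_component_singleton) simp
  then show ?thesis by (simp add: measurable_cong_sets)
qed

lemma sets_coord: "{x. x i = a} \<in> sets MM"
proof -
  have "(\<lambda>x. x i) -` {a} \<inter> space MM \<in> sets MM"
    by (rule measurable_sets[OF meas_comp]) simp
  then show ?thesis by (simp add: space_MM vimage_def)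
qed

lemma sets_neq: "{x. x i \<noteq> x j} \<in> sets MM"
proof -
  have eq: "{x. x i \<noteq> x j} = ({x. x i = True} \<inter> {x. x j = False}) \<union> ({x. x i = False} \<inter> {x. x j = True})"
    by auto
  show ?thesis unfolding eq by (intro sets.Un sets.Int sets_coord)
qed

lemma xi_lower:
  assumes "i \<noteq> j"
  shows "pr j / 2 \<le> measure MM {x. x i \<noteq> x j}"
proof -
  have eq: "measure MM {x. \<forall>k\<in>{i,j}. x k = (k = j)} = pr j * (1 - pr i)"
    using assms by (subst measure_MM_Collect) auto
  have sub: "{x. \<forall>k\<in>{i,j}. x k = (k = j)} \<subseteq> {x. x i \<noteq> x j}"
    using assms by auto
  have "pr j * (1 - pr i) \<le> measure MM {x. x i \<noteq> x j}"
    using MMs.finite_measure_mono[OF sub sets_neq] unfolding eq .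
  moreover have "pr j / 2 \<le> pr j * (1 - pr i)"
    using pr_le[of i] pr_pos[of j] by (auto simp: field_simps)
  ultimately show ?thesis by linarith
qed

lemma sets_MM_all: "finite F \<Longrightarrow> {x. \<forall>i\<in>F. x i = b i} \<in> sets MM"
proof (induction F rule: finite_induct)
  case empty
  then show ?case using sets.top[of MM] by (simp add: space_MM)
next
  case (insert a F)
  have "{x. \<forall>i\<in>insert a F. x i = b i} = {x. x a = b a} \<inter> {x. \<forall>i\<in>F. x i = b i}" by auto
  moreover have "{x. x a = b a} \<in> sets MM" by (rule sets_coord)
  ultimately show ?case using insert by auto
qed

lemma union_lower:
  assumes "finite F" "j \<notin> F"
  shows "(1 - pr j) * (1 - (\<Prod>i\<in>F. (1 - pr i))) \<le> measure MM {x. \<not> x j \<and> (\<exists>i\<in>F. x i)}"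
proof -
  have eq: "{x. \<not> x j \<and> (\<exists>i\<in>F. x i)} = {x. \<forall>i\<in>{j}. x i = False} - {x. \<forall>i\<in>insert j F. x i = False}"
    by auto
  have "measure MM ({x. \<forall>i\<in>{j}. x i = False} - {x. \<forall>i\<in>insert j F. x i = False})
     = measure MM {x. \<forall>i\<in>{j}. x i = False} - measure MM {x. \<forall>i\<in>insert j F. x i = False}"
    by (rule MMs.finite_measure_Diff[OF sets_MM_all sets_MM_all]) (use assms in auto)
  also have "\<dots> = (1 - pr j) - (1 - pr j) * (\<Prod>i\<in>F. (1 - pr i))"
  proof -
    have m1: "measure MM {x. \<forall>i\<in>{j}. x i = False} = 1 - pr j"
      using measure_MM_Collect[of "{j}" "\<lambda>_. False"] by simp
    have m2: "measure MM {x. \<forall>i\<in>insert j F. x i = False} = (1 - pr j) * (\<Prod>i\<in>F. (1 - pr i))"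
      using measure_MM_Collect[of "insert j F" "\<lambda>_. False"] assms by simp
    show ?thesis by (simp only: m1 m2)
  qed
  finally have m: "measure MM ({x. \<forall>i\<in>{j}. x i = False} - {x. \<forall>i\<in>insert j F. x i = False})
     = (1 - pr j) - (1 - pr j) * (\<Prod>i\<in>F. (1 - pr i))" .
  have e2: "(1 - pr j) * (1 - P) = (1 - pr j) - (1 - pr j) * P" for P :: real
    by (metis mult.right_neutral right_diff_distrib)
  show ?thesis by (simp only: eq e2 m order_refl)
qed

lemma prod_exp_bound: "finite F \<Longrightarrow> (\<Prod>i\<in>F. (1 - pr i)) \<le> exp (- (\<Sum>i\<in>F. pr i))"
proof -
  assume F: "finite F"
  have "(\<Prod>i\<in>F. (1 - pr i)) \<le> (\<Prod>i\<in>F. exp (- pr i))"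
  proof (rule prod_mono)
    fix i show "0 \<le> 1 - pr i \<and> 1 - pr i \<le> exp (- pr i)"
      using pr_le1[of i] exp_ge_add_one_self[of "- pr i"] by auto
  qed
  also have "\<dots> = exp (- (\<Sum>i\<in>F. pr i))"
    using F by (simp add: exp_sum[symmetric] sum_negf)
  finally show ?thesis .
qed

lemma pr_unbounded: "\<exists>L. S \<le> (\<Sum>i\<in>(\<lambda>i. i + B) ` {..<L}. pr i)"
proof (rule ccontr)
  assume "\<not> ?thesis"
  then have b: "\<And>L. (\<Sum>i<L. pr (i + B)) \<le> S"
    by (subst (asm) sum.reindex) (auto simp: inj_on_def o_def not_le less_imp_le)
  have "summable (\<lambda>i. pr (i + B))"
    by (rule summableI_nonneg_bounded[OF _ b]) (simp add: less_imp_le pr_pos)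
  moreover have "(\<lambda>i. pr (i + B)) = (\<lambda>n. inverse (real (n + (B + 2))))"
    by (auto simp: pr_def divide_inverse add_ac)
  ultimately have "summable (\<lambda>n. inverse (real (n + (B + 2))))" by simp
  then have "summable (\<lambda>n. inverse (real n) :: real)"
    using summable_iff_shift[of "\<lambda>n. inverse (real n) :: real" "B + 2"] by simp
  then show False using not_summable_harmonic by blast
qed

lemma not_TC1: "\<not> TC1 MM"
proof
  assume "TC1 MM"
  have h: "\<forall>\<epsilon>>0. \<exists>(E :: nat \<Rightarrow> (nat \<Rightarrow> bool) set) J.
        (\<forall>k. E k \<in> sets MM) \<and> finite J \<and>
        (\<forall>k. measure MM (E k) \<le> \<epsilon>) \<and>
        (\<exists>C::real. \<forall>k. measure MM (E k) = 0 \<or> ln (real k + 1) \<le> C * ln (1 / measure MM (E k))) \<and>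
        (\<forall>i. \<exists>j\<in>J. \<exists>k. {x \<in> space MM. x i \<noteq> x j} \<subseteq> E k)"
    using \<open>TC1 MM\<close> unfolding TC1_def by (rule conjunct2)
  have q: "(1/4::real) > 0" by simp
  from h[rule_format, OF q] obtain E J where EJ: "(\<forall>k. E k \<in> sets MM) \<and> finite J \<and>
        (\<forall>k. measure MM (E k) \<le> 1/4) \<and>
        (\<exists>C::real. \<forall>k. measure MM (E k) = 0 \<or> ln (real k + 1) \<le> C * ln (1 / measure MM (E k))) \<and>
        (\<forall>i. \<exists>j\<in>J. \<exists>k. {x \<in> space MM. x i \<noteq> x j} \<subseteq> E k)"
    by (elim exE) (rule that)
  have Es': "\<forall>k. E k \<in> sets MM" using EJ by (elim conjE) assumption
  have fJ: "finite J" using EJ by (elim conjE) assumption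
  have Em': "\<forall>k. measure MM (E k) \<le> 1/4" using EJ by (elim conjE) assumption
  have cov': "\<forall>i. \<exists>j\<in>J. \<exists>k. {x \<in> space MM. x i \<noteq> x j} \<subseteq> E k" using EJ by (elim conjE) assumption
  have C': "\<exists>C::real. \<forall>k. measure MM (E k) = 0 \<or> ln (real k + 1) \<le> C * ln (1 / measure MM (E k))"
    using EJ by (elim conjE) assumption
  have Es: "\<And>k. E k \<in> sets MM" using Es' by (rule spec)
  have Em: "\<And>k. measure MM (E k) \<le> 1/4" using Em' by (rule spec)
  have cov: "\<And>i. \<exists>j\<in>J. \<exists>k. {x \<in> space MM. x i \<noteq> x j} \<subseteq> E k" using cov' by (rule spec)
  from C' obtain C :: real where C': "\<forall>k. measure MM (E k) = 0 \<or> ln (real k + 1) \<le> C * ln (1 / measure MM (E k))"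
    by (rule exE)
  have C: "\<And>k. measure MM (E k) = 0 \<or> ln (real k + 1) \<le> C * ln (1 / measure MM (E k))"
    using C' by (rule spec)
  obtain B where B: "J \<subseteq> {..<B}" using finite_nat_bounded[OF fJ] by (elim exE)
  define c :: real where "c = 1 / (2 * (real B + 2))"
  have cpos: "c > 0" by (simp add: c_def)
  have Elow: "c \<le> measure MM (E k)"
    if j: "j \<in> J" and i: "B \<le> i" and s: "{x \<in> space MM. x i \<noteq> x j} \<subseteq> E k" for i j k
  proof -
    have jB: "j < B" using B j by auto
    then have ij: "i \<noteq> j" using i by auto
    have "pr j / 2 \<le> measure MM {x. x i \<noteq> x j}" by (rule xi_lower[OF ij])
    also have "\<dots> \<le> measure MM (E k)"
      using s by (intro MMs.finite_measure_mono[OF _ Es]) (auto simp: space_MM)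
    finally have a: "pr j / 2 \<le> measure MM (E k)" .
    have "c \<le> pr j / 2" using jB by (simp add: c_def pr_def field_simps)
    with a show ?thesis by linarith
  qed
  define T where "T = max C 0 * ln (1 / c)"
  define K where "K = nat (ceiling (exp T))"
  have klow: "k < K"
    if j: "j \<in> J" and i: "B \<le> i" and s: "{x \<in> space MM. x i \<noteq> x j} \<subseteq> E k" for i j k
  proof -
    define m where "m = measure MM (E k)"
    have cm: "c \<le> m" unfolding m_def by (rule Elow[OF j i s])
    have m4: "m \<le> 1/4" unfolding m_def by (rule Em)
    have mpos: "m > 0" using cm cpos by linarith
    have "ln (real k + 1) \<le> C * ln (1 / m)"
      using C[of k]
    proof (elim disjE)
      assume "measure MM (E k) = 0"
      then show ?thesis using mpos by (simp add: m_def)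
    qed (simp add: m_def)
    moreover have l0: "0 \<le> ln (1 / m)" using mpos m4 by (simp add: field_simps)
    moreover have "ln (1 / m) \<le> ln (1 / c)" using cm cpos mpos by (simp add: field_simps)
    ultimately have "ln (real k + 1) \<le> T" unfolding T_def
    proof -
      assume a: "ln (real k + 1) \<le> C * ln (1 / m)" and b: "0 \<le> ln (1 / m)" and d: "ln (1 / m) \<le> ln (1 / c)"
      have "C * ln (1 / m) \<le> max C 0 * ln (1 / m)" using b by (intro mult_right_mono) auto
      also have "\<dots> \<le> max C 0 * ln (1 / c)" using d by (intro mult_left_mono) auto
      finally show "ln (real k + 1) \<le> max C 0 * ln (1 / c)" using a by linarith
    qed
    then have "real k + 1 \<le> exp T"
      using exp_le_cancel_iff[of "ln (real k + 1)" T] by simp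
    also have "\<dots> \<le> real K" unfolding K_def by linarith
    finally show ?thesis by linarith
  qed
  define G where "G = J \<times> {..<K}"
  have fG: "finite G" using fJ by (simp add: G_def)
  define I where "I L = (\<lambda>i. i + B) ` {..<L}" for L
  define F where "F L g = {i \<in> I L. {x \<in> space MM. x i \<noteq> x (fst g)} \<subseteq> E (snd g)}" for L g
  obtain L where L: "2 * real (card G) + 1 \<le> (\<Sum>i\<in>I L. pr i)"
    using pr_unbounded[of "2 * real (card G) + 1" B] unfolding I_def by (elim exE)
  have fI: "finite (I L)" by (simp add: I_def)
  have "(\<Sum>i\<in>I L. pr i) \<le> (\<Sum>i\<in>I L. \<Sum>g\<in>G. (if i \<in> F L g then pr i else 0))"
  proof (rule sum_mono)
    fix i assume iI: "i \<in> I L"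
    then have iB: "B \<le> i" by (auto simp: I_def)
    from cov[of i] obtain j k where j: "j \<in> J" and s: "{x \<in> space MM. x i \<noteq> x j} \<subseteq> E k" by (elim bexE exE)
    have kK: "k < K" by (rule klow[OF j iB s])
    have gG: "(j, k) \<in> G" using j kK by (simp add: G_def)
    have "i \<in> F L (j, k)" using iI s by (simp add: F_def)
    then have "pr i = (if i \<in> F L (j, k) then pr i else 0)" by simp
    also have "\<dots> \<le> (\<Sum>g\<in>G. (if i \<in> F L g then pr i else 0))"
      by (rule member_le_sum[OF gG]) (use pr_pos in \<open>auto simp: less_imp_le fG\<close>)
    finally show "pr i \<le> (\<Sum>g\<in>G. (if i \<in> F L g then pr i else 0))" .
  qed
  also have "\<dots> = (\<Sum>g\<in>G. \<Sum>i\<in>I L. (if i \<in> F L g then pr i else 0))"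
    by (rule sum.swap)
  also have "\<dots> = (\<Sum>g\<in>G. \<Sum>i\<in>F L g. pr i)"
  proof (rule sum.cong[OF refl])
    fix g
    have "(\<Sum>i\<in>F L g. pr i) = (\<Sum>i\<in>I L. (if {x \<in> space MM. x i \<noteq> x (fst g)} \<subseteq> E (snd g) then pr i else 0))"
      unfolding F_def by (rule sum.inter_filter[OF fI])
    moreover have "(\<Sum>i\<in>I L. (if i \<in> F L g then pr i else 0)) =
       (\<Sum>i\<in>I L. (if {x \<in> space MM. x i \<noteq> x (fst g)} \<subseteq> E (snd g) then pr i else 0))"
      by (rule sum.cong[OF refl]) (simp add: F_def)
    ultimately show "(\<Sum>i\<in>I L. (if i \<in> F L g then pr i else 0)) = (\<Sum>i\<in>F L g. pr i)"
      by simp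
  qed
  finally have tot: "2 * real (card G) + 1 \<le> (\<Sum>g\<in>G. \<Sum>i\<in>F L g. pr i)" using L by linarith
  obtain g where gG: "g \<in> G" and g2: "2 \<le> (\<Sum>i\<in>F L g. pr i)"
  proof (rule ccontr)
    assume nt: "\<not> thesis"
    note ob = that
    have "(\<Sum>i\<in>F L g. pr i) \<le> 2" if gG: "g \<in> G" for g
    proof (rule ccontr)
      assume "\<not> (\<Sum>i\<in>F L g. pr i) \<le> 2"
      then have "2 \<le> (\<Sum>i\<in>F L g. pr i)" by linarith
      from ob[OF gG this] nt show False by blast
    qed
    then have "(\<Sum>g\<in>G. \<Sum>i\<in>F L g. pr i) \<le> real (card G) * 2" by (rule sum_bounded_above)
    with tot show False by linarith
  qed
  obtain j k where g: "g = (j, k)" by (cases g)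
  have j: "j \<in> J" using gG g by (simp add: G_def)
  have jB: "j < B" using B j by auto
  have fF: "finite (F L g)" using fI by (simp add: F_def)
  have jF: "j \<notin> F L g" using jB by (auto simp: F_def I_def)
  have sub: "{x. \<not> x j \<and> (\<exists>i\<in>F L g. x i)} \<subseteq> E k"
  proof
    fix x assume x: "x \<in> {x. \<not> x j \<and> (\<exists>i\<in>F L g. x i)}"
    then obtain i where iF: "i \<in> F L g" and xi: "x i" and xj: "\<not> x j" by blast
    then have "{x \<in> space MM. x i \<noteq> x j} \<subseteq> E k" by (simp add: F_def g)
    moreover have "x \<in> {x \<in> space MM. x i \<noteq> x j}" using xi xj by (simp add: space_MM)
    ultimately show "x \<in> E k" by blast
  qed
  have "(1 - pr j) * (1 - (\<Prod>i\<in>F L g. (1 - pr i))) \<le> measure MM {x. \<not> x j \<and> (\<exists>i\<in>F L g. x i)}"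
    by (rule union_lower[OF fF jF])
  also have "\<dots> \<le> measure MM (E k)" by (rule MMs.finite_measure_mono[OF sub Es])
  also have "\<dots> \<le> 1/4" by (rule Em)
  finally have le: "(1 - pr j) * (1 - (\<Prod>i\<in>F L g. (1 - pr i))) \<le> 1/4" .
  have "(\<Prod>i\<in>F L g. (1 - pr i)) \<le> exp (- (\<Sum>i\<in>F L g. pr i))" by (rule prod_exp_bound[OF fF])
  also have "\<dots> \<le> exp (-2)" using g2 by simp
  also have "\<dots> \<le> 1/3"
  proof -
    have "3 \<le> exp (2::real)" using exp_ge_add_one_self[of 2] by simp
    then show ?thesis by (simp add: exp_minus field_simps)
  qed
  finally have P: "(\<Prod>i\<in>F L g. (1 - pr i)) \<le> 1/3" .
  have "1/2 \<le> 1 - pr j" using pr_le[of j] by simp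
  moreover have "2/3 \<le> 1 - (\<Prod>i\<in>F L g. (1 - pr i))" using P by simp
  ultimately have "1/2 * (2/3) \<le> (1 - pr j) * (1 - (\<Prod>i\<in>F L g. (1 - pr i)))"
    by (intro mult_mono) auto
  with le show False by simp
qed



definition Q :: "nat \<Rightarrow> (nat \<Rightarrow> nat \<Rightarrow> bool) measure" where
  "Q n = (\<Pi>\<^sub>M i\<in>{..<n}. MM)"

lemma prob_Q: "prob_space (Q n)"
  unfolding Q_def by (rule prob_space_PiM) (rule prob_MM)

lemma space_Q: "space (Q n) = {..<n} \<rightarrow>\<^sub>E UNIV"
  by (simp add: Q_def space_PiM space_MM)

lemma measure_MM_coord: "measure MM {x \<in> space MM. x j} = pr j"
proof -
  have "{x \<in> space MM. x j} = {x. \<forall>i\<in>{j}. x i = True}" by (auto simp: space_MM)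
  then show ?thesis using measure_MM_Collect[of "{j}" "\<lambda>_. True"] by simp
qed

lemma emeasure_MM_coord: "emeasure MM {x. x j} = ennreal (pr j)"
proof -
  have "{x. x j} = {x. \<forall>i\<in>{j}. x i = True}" by auto
  then show ?thesis using emeasure_MM_Collect[of "{j}" "\<lambda>_. True"] by simp
qed

lemma sets_MM_coord: "{x. x j} \<in> sets MM"
  using sets_coord[of j True] by simp

lemma Qcomp_meas: "i < n \<Longrightarrow> (\<lambda>\<omega>. \<omega> i j) \<in> measurable (Q n) (count_space UNIV)"
proof -
  assume i: "i < n"
  have "(\<lambda>\<omega>. \<omega> i) \<in> measurable (Q n) MM"
    unfolding Q_def by (rule measurable_component_singleton) (use i in simp)
  then show ?thesis by (rule measurable_compose) (rule meas_comp)
qed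

lemma Qcomp_sets: "i < n \<Longrightarrow> {\<omega> \<in> space (Q n). \<omega> i j} \<in> sets (Q n)"
proof -
  assume i: "i < n"
  have "(\<lambda>\<omega>. \<omega> i j) -` {True} \<inter> space (Q n) \<in> sets (Q n)"
    by (rule measurable_sets[OF Qcomp_meas[OF i]]) simp
  moreover have "(\<lambda>\<omega>. \<omega> i j) -` {True} \<inter> space (Q n) = {\<omega> \<in> space (Q n). \<omega> i j}" by auto
  ultimately show ?thesis by simp
qed

lemma Q_Collect:
  assumes "S \<subseteq> {..<n}" "\<And>i. i \<in> S \<Longrightarrow> A i \<in> sets MM"
  shows "emeasure (Q n) {\<omega>\<in>space (Q n). \<forall>i\<in>S. \<omega> i \<in> A i} = (\<Prod>i\<in>S. emeasure MM (A i))"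
proof -
  interpret P: product_prob_space "\<lambda>_::nat. MM" "{..<n}"
    by (intro product_prob_spaceI prob_MM)
  have fS: "finite S" using assms(1) finite_subset by blast
  show ?thesis
    unfolding Q_def by (rule P.emeasure_PiM_Collect) (use assms fS in auto)
qed

lemma indep_Q:
  assumes n: "0 < n"
  shows "prob_space.indep_vars (Q n) (\<lambda>_. MM) (\<lambda>i \<omega>. \<omega> i) {..<n}"
proof -
  interpret Qp: prob_space "Q n" by (rule prob_Q)
  have ne: "{..<n} \<noteq> {}" using n by auto
  have rv: "\<And>i. i \<in> {..<n} \<Longrightarrow> Qp.random_variable MM (\<lambda>\<omega>. \<omega> i)"
    unfolding Q_def by (rule measurable_component_singleton) simp
  show ?thesis
  proof (subst Qp.indep_vars_iff_distr_eq_PiM'[OF ne rv])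
    have "distr (Q n) (\<Pi>\<^sub>M i\<in>{..<n}. MM) (\<lambda>x. \<lambda>i\<in>{..<n}. x i) = distr (Q n) (Q n) (\<lambda>x. x)"
      by (rule distr_cong) (auto simp: Q_def space_PiM PiE_def extensional_restrict)
    also have "\<dots> = Q n" by simp
    also have "\<dots> = (\<Pi>\<^sub>M i\<in>{..<n}. distr (Q n) MM (\<lambda>\<omega>. \<omega> i))"
      unfolding Q_def by (intro PiM_cong refl) (rule distr_PiM_component[symmetric], rule prob_MM, simp)
    finally show "distr (Q n) (\<Pi>\<^sub>M i\<in>{..<n}. MM) (\<lambda>x. \<lambda>i\<in>{..<n}. x i) =
      (\<Pi>\<^sub>M i\<in>{..<n}. distr (Q n) MM (\<lambda>\<omega>. \<omega> i))" .
  qed simp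
qed

lemma meas_ind: "(\<lambda>x. if x j then 1 else 0::real) \<in> borel_measurable MM"
  by (rule measurable_compose[OF meas_comp]) simp

lemma Q_coord_prob: "i < n \<Longrightarrow> measure (Q n) {\<omega> \<in> space (Q n). \<omega> i j} = pr j"
proof -
  assume i: "i < n"
  interpret Qp: prob_space "Q n" by (rule prob_Q)
  have "emeasure (Q n) {\<omega>\<in>space (Q n). \<forall>k\<in>{i}. \<omega> k \<in> {x. x j}} = (\<Prod>k\<in>{i}. emeasure MM {x. x j})"
    by (rule Q_Collect) (use i sets_MM_coord in auto)
  then have "emeasure (Q n) {\<omega> \<in> space (Q n). \<omega> i j} = ennreal (pr j)"
    by (simp add: emeasure_MM_coord)
  then show ?thesis by (simp add: Qp.emeasure_eq_measure less_imp_le pr_pos)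
qed

lemma hoeff:
  assumes n: "0 < n" and t: "0 \<le> t"
  shows "measure (Q n) {\<omega>\<in>space (Q n). t \<le> \<bar>1 / real n * (\<Sum>i<n. if \<omega> i j then 1 else 0) - pr j\<bar>}
           \<le> 2 * exp (-2 * real n * t\<^sup>2)"
proof -
  interpret Qp: prob_space "Q n" by (rule prob_Q)
  define X where "X = (\<lambda>i (\<omega>::nat\<Rightarrow>nat\<Rightarrow>bool). if \<omega> i j then 1 else (0::real))"
  have ind0: "Qp.indep_vars (\<lambda>_. borel) (\<lambda>i \<omega>. (\<lambda>x. if x j then 1 else 0::real) (\<omega> i)) {..<n}"
    by (rule Qp.indep_vars_compose2[OF indep_Q[OF n]]) (rule meas_ind)
  have ind: "Qp.indep_vars (\<lambda>_. borel) X {..<n}"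
    using ind0 by (simp add: X_def)
  have E: "Qp.expectation (X i) = pr j" if i: "i < n" for i
  proof -
    have "Qp.expectation (X i) = Qp.expectation (indicator {\<omega> \<in> space (Q n). \<omega> i j})"
      by (intro Bochner_Integration.integral_cong) (auto simp: X_def indicator_def)
    also have "\<dots> = measure (Q n) {\<omega> \<in> space (Q n). \<omega> i j}"
      by (simp add: Int_absorb2)
    also have "\<dots> = pr j" by (rule Q_coord_prob[OF i])
    finally show ?thesis .
  qed
  have mu: "(\<Sum>i<n. Qp.expectation (X i)) = real n * pr j"
    using E by simp
  interpret H: Hoeffding_ineq "Q n" "{..<n}" X "\<lambda>_. 0" "\<lambda>_. 1" "\<Sum>i<n. Qp.expectation (X i)"
  proof unfold_locales
    show "Qp.indep_vars (\<lambda>_. borel) X {..<n}" by (rule ind)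
  qed (simp_all add: X_def)
  have nt: "0 \<le> real n * t" using t by simp
  have pos: "(\<Sum>i<n. ((1::real) - 0)\<^sup>2) > 0" using n by simp
  have h: "measure (Q n) {x \<in> space (Q n). real n * t \<le> \<bar>(\<Sum>i<n. X i x) - real n * pr j\<bar>}
      \<le> 2 * exp (- 2 * (real n * t)\<^sup>2 / (\<Sum>i<n. ((1::real) - 0)\<^sup>2))"
    using H.Hoeffding_ineq_abs_ge[OF nt pos] unfolding mu .
  have rhs: "- 2 * (real n * t)\<^sup>2 / (\<Sum>i<n. ((1::real) - 0)\<^sup>2) = -2 * real n * t\<^sup>2"
    using n by (simp add: power2_eq_square field_simps)
  have set_eq: "{\<omega>\<in>space (Q n). t \<le> \<bar>1 / real n * (\<Sum>i<n. if \<omega> i j then 1 else 0) - pr j\<bar>}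
     = {x \<in> space (Q n). real n * t \<le> \<bar>(\<Sum>i<n. X i x) - real n * pr j\<bar>}"
  proof (intro Collect_cong conj_cong refl)
    fix \<omega>
    define S where "S = (\<Sum>i<n. if \<omega> i j then 1 else (0::real))"
    have S': "(\<Sum>i<n. X i \<omega>) = S" by (simp add: S_def X_def)
    have "\<bar>S - real n * pr j\<bar> = real n * \<bar>1 / real n * S - pr j\<bar>"
    proof -
      have "S - real n * pr j = real n * (1 / real n * S - pr j)" using n by (simp add: field_simps)
      then show ?thesis by (simp add: abs_mult)
    qed
    then show "(t \<le> \<bar>1 / real n * (\<Sum>i<n. if \<omega> i j then 1 else 0) - pr j\<bar>) =
        (real n * t \<le> \<bar>(\<Sum>i<n. X i \<omega>) - real n * pr j\<bar>)"
      unfolding S' S_def[symmetric] using n by (simp add: mult_le_cancel_left_pos)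
  qed
  show ?thesis unfolding set_eq using h unfolding rhs .
qed

lemma Bset_bound:
  "emeasure (Q n) {\<omega>\<in>space (Q n). \<exists>a<n. \<exists>b<n. a \<noteq> b \<and> \<omega> a j \<and> \<omega> b j}
     \<le> ennreal (real n ^ 2 * pr j ^ 2)"
proof -
  define P where "P = {p \<in> {..<n} \<times> {..<n}. fst p \<noteq> snd p}"
  define C where "C p = {\<omega>\<in>space (Q n). \<omega> (fst p) j} \<inter> {\<omega>\<in>space (Q n). \<omega> (snd p) j}" for p
  have fP: "finite P" by (simp add: P_def)
  have eq: "{\<omega>\<in>space (Q n). \<exists>a<n. \<exists>b<n. a \<noteq> b \<and> \<omega> a j \<and> \<omega> b j} = (\<Union>p\<in>P. C p)"
    by (auto simp: P_def C_def) blast+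
  have Cs: "C ` P \<subseteq> sets (Q n)"
    by (auto simp: P_def C_def intro!: sets.Int Qcomp_sets)
  have Cm: "emeasure (Q n) (C p) = ennreal (pr j ^ 2)" if p: "p \<in> P" for p
  proof -
    obtain a b where ab: "p = (a, b)" "a < n" "b < n" "a \<noteq> b" using p by (auto simp: P_def)
    have "C p = {\<omega>\<in>space (Q n). \<forall>k\<in>{a, b}. \<omega> k \<in> {x. x j}}" by (auto simp: C_def ab)
    also have "emeasure (Q n) \<dots> = (\<Prod>k\<in>{a, b}. emeasure MM {x. x j})"
      by (rule Q_Collect) (use ab sets_MM_coord in auto)
    also have "\<dots> = ennreal (pr j) * ennreal (pr j)" using ab by (simp add: emeasure_MM_coord)
    also have "\<dots> = ennreal (pr j ^ 2)" by (simp add: ennreal_mult' power2_eq_square less_imp_le pr_pos)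
    finally show ?thesis .
  qed
  have "emeasure (Q n) (\<Union>p\<in>P. C p) \<le> (\<Sum>p\<in>P. emeasure (Q n) (C p))"
    by (rule emeasure_subadditive_finite[OF fP Cs])
  also have "\<dots> = (\<Sum>p\<in>P. ennreal (pr j ^ 2))" by (rule sum.cong[OF refl]) (rule Cm)
  also have "\<dots> = ennreal (real (card P) * pr j ^ 2)" by (simp add: ennreal_of_nat_eq_real_of_nat ennreal_mult')
  also have "\<dots> \<le> ennreal (real n ^ 2 * pr j ^ 2)"
  proof (rule ennreal_leI, rule mult_right_mono)
    have "card P \<le> card ({..<n} \<times> {..<n})" unfolding P_def by (rule card_mono) auto
    then have "card P \<le> n * n" by simp
    then show "real (card P) \<le> real n ^ 2" by (simp add: power2_eq_square of_nat_mult[symmetric] del: of_nat_mult)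
  qed simp
  finally show ?thesis unfolding eq .
qed



lemma Qcomp_meas_all[measurable]: "(\<lambda>\<omega>. \<omega> a j) \<in> measurable (Q n) (count_space UNIV)"
proof (cases "a < n")
  case True
  then show ?thesis by (rule Qcomp_meas)
next
  case False
  have "(\<lambda>\<omega>::nat\<Rightarrow>nat\<Rightarrow>bool. undefined j :: bool) \<in> measurable (Q n) (count_space UNIV)"
    by simp
  moreover have "\<And>\<omega>. \<omega> \<in> space (Q n) \<Longrightarrow> undefined j = \<omega> a j"
    using False by (auto simp: space_Q PiE_def extensional_def)
  ultimately show ?thesis by (rule measurable_cong[THEN iffD1, rotated])
qed

lemma meas_mean[measurable]:
  "(\<lambda>\<omega>. 1 / real n * (\<Sum>i<n. if \<omega> i j then 1 else 0::real)) \<in> borel_measurable (Q n)"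
  by measurable

lemma tele_sum:
  fixes N :: nat
  shows "(\<lambda>j. 1 / (real (j + N) + 1) - 1 / (real (Suc j + N) + 1)) sums (1 / (real N + 1))"
proof -
  have lim: "(\<lambda>j. 1 / (real (j + N) + 1)) \<longlonglongrightarrow> 0"
    by real_asymp
  show ?thesis using telescope_sums'[OF lim] by simp
qed

lemma pr_sq_le: "pr (j + N) ^ 2 \<le> 1 / (real (j + N) + 1) - 1 / (real (Suc j + N) + 1)"
proof -
  define x where "x = real (j + N)"
  have x: "0 \<le> x" by (simp add: x_def)
  have "pr (j + N) ^ 2 = 1 / ((x + 2) * (x + 2))" by (simp add: pr_def x_def power2_eq_square)
  also have "\<dots> \<le> 1 / ((x + 1) * (x + 2))"
    using x by (intro divide_left_mono mult_mono mult_pos_pos) auto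
  also have "\<dots> = 1 / (x + 1) - 1 / (x + 2)" using x by (simp add: field_simps)
  also have "\<dots> = 1 / (real (j + N) + 1) - 1 / (real (Suc j + N) + 1)" by (simp add: x_def)
  finally show ?thesis .
qed

lemma Delta_eq:
  "Delta MM n = (\<integral>\<^sup>+\<omega>. (SUP j. ennreal \<bar>1 / real n * (\<Sum>i<n. if \<omega> i j then 1 else 0) - pr j\<bar>) \<partial>Q n)"
  unfolding Delta_def Q_def measure_MM_coord ..

lemma count_le1:
  fixes n :: nat and \<omega> :: "nat \<Rightarrow> nat \<Rightarrow> bool"
  assumes "\<not> (\<exists>a<n. \<exists>b<n. a \<noteq> b \<and> \<omega> a j \<and> \<omega> b j)"
  shows "(\<Sum>i<n. if \<omega> i j then 1 else 0::real) \<le> 1"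
proof -
  have "(\<Sum>i<n. if \<omega> i j then 1 else (0::real)) = (\<Sum>i\<in>{i\<in>{..<n}. \<omega> i j}. 1)"
    by (intro sum.mono_neutral_cong_right) auto
  also have "\<dots> = real (card {i\<in>{..<n}. \<omega> i j})" by simp
  also have "card {i\<in>{..<n}. \<omega> i j} \<le> Suc 0"
    using assms by (subst card_le_Suc0_iff_eq) auto
  finally show ?thesis by simp
qed

lemma mean_bounds: "0 \<le> 1 / real n * (\<Sum>i<n. if \<omega> i j then 1 else 0::real)"
   "1 / real n * (\<Sum>i<n. if \<omega> i j then 1 else 0::real) \<le> 1"
proof -
  show "0 \<le> 1 / real n * (\<Sum>i<n. if \<omega> i j then 1 else 0::real)"
    by (intro mult_nonneg_nonneg sum_nonneg) auto
  have "(\<Sum>i<n. if \<omega> i j then 1 else 0::real) \<le> (\<Sum>i<n. 1)" by (intro sum_mono) auto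
  then have "(\<Sum>i<n. if \<omega> i j then 1 else 0::real) \<le> real n" by simp
  then show "1 / real n * (\<Sum>i<n. if \<omega> i j then 1 else 0::real) \<le> 1"
    by (cases "n = 0") (auto simp: field_simps)
qed

lemma Delta_bound:
  assumes n: "0 < n" and t: "0 < t" and tn: "1 / real n \<le> t" and tN: "1 / (real N + 2) \<le> t"
  shows "Delta MM n \<le> ennreal (t + real N * (2 * exp (-2 * real n * t\<^sup>2)) + real n ^ 2 / (real N + 1))"
proof -
  interpret Qp: prob_space "Q n" by (rule prob_Q)
  define m where "m j (\<omega>::nat\<Rightarrow>nat\<Rightarrow>bool) = 1 / real n * (\<Sum>i<n. if \<omega> i j then 1 else 0::real)" for j \<omega>
  define A where "A j = {\<omega>\<in>space (Q n). t \<le> \<bar>m j \<omega> - pr j\<bar>}" for j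
  define Bs where "Bs j = {\<omega>\<in>space (Q n). \<exists>a<n. \<exists>b<n. a \<noteq> b \<and> \<omega> a j \<and> \<omega> b j}" for j
  define U1 where "U1 = (\<Union>j<N. A j)"
  define U2 where "U2 = (\<Union>j. Bs (j + N))"
  have As: "A j \<in> sets (Q n)" for j unfolding A_def m_def by measurable
  have Bss: "Bs j \<in> sets (Q n)" for j unfolding Bs_def by measurable
  have U1s: "U1 \<in> sets (Q n)" unfolding U1_def using As by auto
  have U2s: "U2 \<in> sets (Q n)" unfolding U2_def using Bss by auto
  have pw: "(SUP j. ennreal \<bar>m j \<omega> - pr j\<bar>) \<le> ennreal t + indicator (U1 \<union> U2) \<omega>"
    if \<omega>: "\<omega> \<in> space (Q n)" for \<omega>
  proof (rule SUP_least)
    fix j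
    show "ennreal \<bar>m j \<omega> - pr j\<bar> \<le> ennreal t + indicator (U1 \<union> U2) \<omega>"
    proof (cases "\<omega> \<in> U1 \<union> U2")
      case True
      have "\<bar>m j \<omega> - pr j\<bar> \<le> 1"
        using mean_bounds[of n \<omega> j] pr_pos[of j] pr_le1[of j] unfolding m_def by linarith
      then have "ennreal \<bar>m j \<omega> - pr j\<bar> \<le> ennreal 1" by (rule ennreal_leI)
      also have "\<dots> \<le> ennreal t + 1" by simp
      finally show ?thesis using True by simp
    next
      case False
      have "\<bar>m j \<omega> - pr j\<bar> \<le> t"
      proof (cases "j < N")
        case True
        then have "\<omega> \<notin> A j" using False by (auto simp: U1_def)
        then show ?thesis using \<omega> by (auto simp: A_def)
      next
        case jN: False
        have "j = (j - N) + N" using jN by simp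
        then have "\<omega> \<notin> Bs j" using False unfolding U2_def by (metis UN_iff UNIV_I UnCI)
        then have nb: "\<not> (\<exists>a<n. \<exists>b<n. a \<noteq> b \<and> \<omega> a j \<and> \<omega> b j)" using \<omega> by (auto simp: Bs_def)
        have "m j \<omega> \<le> 1 / real n * 1"
          unfolding m_def by (rule mult_left_mono[OF count_le1[of n \<omega> j, OF nb]]) simp
        then have m1: "m j \<omega> \<le> t" using tn by simp
        have m0: "0 \<le> m j \<omega>" unfolding m_def by (rule mean_bounds)
        have "pr j \<le> 1 / (real N + 2)" using jN by (simp add: pr_def field_simps)
        then have "pr j \<le> t" using tN by linarith
        then show ?thesis using m1 m0 pr_pos[of j] by linarith
      qed
      then show ?thesis using False by (simp add: ennreal_leI)
    qed
  qed
  have "Delta MM n = (\<integral>\<^sup>+\<omega>. (SUP j. ennreal \<bar>m j \<omega> - pr j\<bar>) \<partial>Q n)"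
    unfolding Delta_eq m_def ..
  also have "\<dots> \<le> (\<integral>\<^sup>+\<omega>. (ennreal t + indicator (U1 \<union> U2) \<omega>) \<partial>Q n)"
    by (rule nn_integral_mono) (rule pw)
  also have "\<dots> = (\<integral>\<^sup>+\<omega>. ennreal t \<partial>Q n) + (\<integral>\<^sup>+\<omega>. indicator (U1 \<union> U2) \<omega> \<partial>Q n)"
    by (rule nn_integral_add) (use U1s U2s in auto)
  also have "\<dots> = ennreal t + emeasure (Q n) (U1 \<union> U2)"
    using U1s U2s by (simp add: Qp.emeasure_space_1)
  also have "emeasure (Q n) (U1 \<union> U2) \<le> emeasure (Q n) U1 + emeasure (Q n) U2"
    by (rule emeasure_subadditive[OF U1s U2s])
  also have "emeasure (Q n) U1 \<le> ennreal (real N * (2 * exp (-2 * real n * t\<^sup>2)))"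
  proof -
    have "emeasure (Q n) U1 \<le> (\<Sum>j<N. emeasure (Q n) (A j))"
      unfolding U1_def by (rule emeasure_subadditive_finite) (use As in auto)
    also have "\<dots> \<le> (\<Sum>j<N. ennreal (2 * exp (-2 * real n * t\<^sup>2)))"
    proof (rule sum_mono)
      fix j
      have "measure (Q n) (A j) \<le> 2 * exp (-2 * real n * t\<^sup>2)"
        unfolding A_def m_def by (rule hoeff[OF n]) (use t in simp)
      then show "emeasure (Q n) (A j) \<le> ennreal (2 * exp (-2 * real n * t\<^sup>2))"
        by (simp add: Qp.emeasure_eq_measure ennreal_leI)
    qed
    also have "\<dots> = ennreal (real N * (2 * exp (-2 * real n * t\<^sup>2)))"
      by (simp add: ennreal_of_nat_eq_real_of_nat ennreal_mult')
    finally show ?thesis .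
  qed
  also have "emeasure (Q n) U2 \<le> ennreal (real n ^ 2 / (real N + 1))"
  proof -
    define f where "f j = 1 / (real (j + N) + 1) - 1 / (real (Suc j + N) + 1)" for j
    have fpos: "0 \<le> f j" for j unfolding f_def by (simp add: field_simps)
    have fs: "(\<lambda>j. real n ^ 2 * f j) sums (real n ^ 2 * (1 / (real N + 1)))"
      unfolding f_def by (rule sums_mult[OF tele_sum])
    have "emeasure (Q n) U2 \<le> (\<Sum>j. emeasure (Q n) (Bs (j + N)))"
      unfolding U2_def by (rule emeasure_subadditive_countably) (use Bss in auto)
    also have "\<dots> \<le> (\<Sum>j. ennreal (real n ^ 2 * f j))"
    proof (rule suminf_le[OF _ summableI summableI])
      fix j
      have "emeasure (Q n) (Bs (j + N)) \<le> ennreal (real n ^ 2 * pr (j + N) ^ 2)"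
        unfolding Bs_def by (rule Bset_bound)
      also have "\<dots> \<le> ennreal (real n ^ 2 * f j)"
        unfolding f_def by (intro ennreal_leI mult_left_mono pr_sq_le) simp
      finally show "emeasure (Q n) (Bs (j + N)) \<le> ennreal (real n ^ 2 * f j)" .
    qed
    also have "\<dots> = ennreal (real n ^ 2 * (1 / (real N + 1)))"
    proof (rule sums_unique[symmetric])
      show "(\<lambda>j. ennreal (real n ^ 2 * f j)) sums ennreal (real n ^ 2 * (1 / (real N + 1)))"
        using fs fpos by (subst sums_ennreal) auto
    qed
    finally show ?thesis by simp
  qed
  finally show ?thesis
    using t by (simp add: ennreal_plus[symmetric] add.assoc del: ennreal_plus)
qed



lemma g_lim: "(\<lambda>n. real n powr (-1/4) + real (n^3) * (2 * exp (-2 * real n * (real n powr (-1/4))\<^sup>2))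
   + real n ^ 2 / (real (n^3) + 1)) \<longlonglongrightarrow> 0"
  by real_asymp

lemma Delta_lim: "Delta MM \<longlonglongrightarrow> 0"
proof -
  define g where "g n = real n powr (-1/4) + real (n^3) * (2 * exp (-2 * real n * (real n powr (-1/4))\<^sup>2))
   + real n ^ 2 / (real (n^3) + 1)" for n :: nat
  have ev: "eventually (\<lambda>n. Delta MM n \<le> ennreal (g n)) sequentially"
    using eventually_ge_at_top[of "1::nat"]
  proof eventually_elim
    case (elim n)
    then have n: "0 < n" by simp
    have rn: "1 \<le> real n" using elim by simp
    define t where "t = real n powr (-1/4)"
    have t: "0 < t" using n by (simp add: t_def)
    have "real n powr (-1) \<le> real n powr (-1/4)" by (rule powr_mono) (use rn in auto)
    then have tn: "1 / real n \<le> t" using n by (simp add: t_def powr_minus_divide)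
    have "1 / (real (n^3) + 2) \<le> 1 / real n"
    proof (rule divide_left_mono)
      have "n^1 \<le> n^3" by (rule power_increasing) (use elim in auto)
      then have "real n \<le> real (n^3)" by simp
      then show "real n \<le> real (n^3) + 2" by linarith
    qed (use n in \<open>auto intro!: mult_pos_pos add_nonneg_pos\<close>)
    then have tN: "1 / (real (n^3) + 2) \<le> t" using tn by linarith
    show ?case using Delta_bound[OF n t tn tN] by (simp add: g_def t_def)
  qed
  have gl: "(\<lambda>n. ennreal (g n)) \<longlonglongrightarrow> ennreal 0"
    by (rule tendsto_ennrealI) (unfold g_def, rule g_lim)
  show ?thesis
    by (rule tendsto_sandwich[OF _ ev tendsto_const]) (use gl in auto)
qed

theorem proposition21:
  shows "\<exists>M. is_prob_on_cube M \<and> (Delta M \<longlonglongrightarrow> 0) \<and> \<not> TC1 M"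
proof (intro exI conjI)
  show "is_prob_on_cube MM" unfolding is_prob_on_cube_def using prob_MM sets_MM by simp
  show "Delta MM \<longlonglongrightarrow> 0" by (rule Delta_lim)
  show "\<not> TC1 MM" by (rule not_TC1)
qed

end
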